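(* Let $G$ be a torsion-free discrete group such that the $\ell^1$ Hattori–Stallings trace $HS^1:K_0(\ell^1(G))\to\ell^1([G])$ takes its values in $\bigoplus_{\mathrm{FC}(G)}\mathbb{C}$. Then $\ell^1(G)$ contains no idempotent other than $0$ and $1$.
   Context: $[G]$ is the set of conjugacy classes of $G$, $\mathrm{FC}(G)$ the subset of classes of finite order elements (here just $\{[1]\}$). $\ell^1(G)$ is the Banach convolution algebra of absolutely summable functions $a=\sum a_g g$ on $G$, and $\ell^1([G])$ the Banach space of absolutely summable functions on $[G]$. $HS^1$ is induced on $K_0$ by the trace $p(a)=\sum_{[x]}\big(\sum_{g\in[x]}a_g\big)[x]$ applied to the diagonal of idempotent matrices. *)

theory Defs
  imports "HOL-Analysis.Analysis"
begin

text \<open>The discrete group G is modelled as a type 'g of class group_add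
  (additive notation, NOT assumed commutative): group product is +,
  identity is 0, inverse is unary minus.\<close>

definition torsion_free :: "'g::group_add itself \<Rightarrow> bool" where
  "torsion_free _ \<longleftrightarrow> (\<forall>x::'g. \<forall>n::nat. n > 0 \<longrightarrow> ((+) x ^^ n) 0 = 0 \<longrightarrow> x = 0)"

definition finite_order :: "'g::group_add \<Rightarrow> bool" where
  "finite_order x \<longleftrightarrow> (\<exists>n::nat. n > 0 \<and> ((+) x ^^ n) 0 = 0)"

definition l1 :: "('g \<Rightarrow> complex) \<Rightarrow> bool" where
  "l1 a \<longleftrightarrow> (\<lambda>g. norm (a g)) summable_on UNIV"

definition conv :: "('g::group_add \<Rightarrow> complex) \<Rightarrow> ('g \<Rightarrow> complex) \<Rightarrow> 'g \<Rightarrow> complex" where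
  "conv a b = (\<lambda>g. \<Sum>\<^sub>\<infinity>h. a h * b (- h + g))"

definition l1_one :: "'g::group_add \<Rightarrow> complex" where
  "l1_one = (\<lambda>g. if g = 0 then 1 else 0)"

text \<open>n x n matrices over l^1(G), entries E i j for i,j < n.\<close>
definition mat_mult :: "nat \<Rightarrow> (nat \<Rightarrow> nat \<Rightarrow> 'g::group_add \<Rightarrow> complex)
    \<Rightarrow> (nat \<Rightarrow> nat \<Rightarrow> 'g \<Rightarrow> complex) \<Rightarrow> nat \<Rightarrow> nat \<Rightarrow> 'g \<Rightarrow> complex" where
  "mat_mult n E F = (\<lambda>i j g. \<Sum>k<n. conv (E i k) (F k j) g)"

definition idem_mat :: "nat \<Rightarrow> (nat \<Rightarrow> nat \<Rightarrow> 'g::group_add \<Rightarrow> complex) \<Rightarrow> bool" where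
  "idem_mat n E \<longleftrightarrow> (\<forall>i<n. \<forall>j<n. l1 (E i j) \<and> mat_mult n E E i j = E i j)"

definition conj_class :: "'g::group_add \<Rightarrow> 'g set" where
  "conj_class x = {g + x - g | g. True}"

definition conj_classes :: "'g::group_add set set" where
  "conj_classes = range conj_class"

definition FC :: "'g::group_add set set" where
  "FC = {conj_class x | x. finite_order x}"

text \<open>Hattori-Stallings trace of an idempotent matrix E:
  p(sum_i E_ii), a function on [G], HS(E)([x]) = sum_{g in [x]} sum_i E_ii(g).\<close>
definition HS1 :: "nat \<Rightarrow> (nat \<Rightarrow> nat \<Rightarrow> 'g::group_add \<Rightarrow> complex) \<Rightarrow> 'g set \<Rightarrow> complex" where
  "HS1 n E C = (\<Sum>\<^sub>\<infinity>g\<in>C. \<Sum>i<n. E i i g)"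

text \<open>A function on [G] lies in the direct sum over FC(G) of C:
  finitely supported, support contained in FC(G).\<close>
definition in_FC_sum :: "('g::group_add set \<Rightarrow> complex) \<Rightarrow> bool" where
  "in_FC_sum f \<longleftrightarrow> finite {C \<in> conj_classes. f C \<noteq> 0} \<and> {C \<in> conj_classes. f C \<noteq> 0} \<subseteq> FC"

end

theory Submission
  imports Defs
begin

lemma l1_norm_le:
  assumes "l1 c" shows "norm (c x) \<le> (\<Sum>\<^sub>\<infinity>y. norm (c y))"
proof -
  have "(\<Sum>\<^sub>\<infinity>y\<in>{x}. norm (c y)) \<le> (\<Sum>\<^sub>\<infinity>y. norm (c y))"
    by (rule infsum_mono_neutral) (use assms in \<open>auto simp: l1_def\<close>)
  then show ?thesis by simp
qed

lemma prod_abs_summable: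
  fixes a b :: "'a \<Rightarrow> complex"
  assumes "l1 a" "l1 b"
  shows "(\<lambda>p. norm (a (fst p)) * norm (b (snd p))) summable_on UNIV"
proof -
  have *: "(\<lambda>p. norm ((\<lambda>(h::'a,k::'a). a h * b k) p)) summable_on (Sigma UNIV (\<lambda>_. UNIV))"
  proof (rule Infinite_Sum.abs_summable_on_Sigma_iff[THEN iffD2], intro conjI ballI)
    fix h show "(\<lambda>k. norm ((\<lambda>(h,k). a h * b k) (h, k))) summable_on UNIV"
      using assms(2) by (simp add: l1_def norm_mult summable_on_cmult_right)
  next
    have "(\<lambda>h. norm (a h) * (\<Sum>\<^sub>\<infinity>k. norm (b k))) summable_on UNIV"
      using assms(1) by (simp add: l1_def summable_on_cmult_left)
    then show "(\<lambda>h. norm (\<Sum>\<^sub>\<infinity>k. norm ((\<lambda>(h,k). a h * b k) (h, k)))) summable_on UNIV"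
      by (simp add: norm_mult infsum_cmult_right' infsum_nonneg)
  qed
  show ?thesis using * by (simp add: norm_mult case_prod_unfold)
qed

lemma sigma_parts:
  fixes F :: "'a \<times> 'b \<Rightarrow> complex"
  assumes "(\<lambda>p. norm (F p)) summable_on UNIV"
  shows "(\<lambda>y. norm (F (x,y))) summable_on UNIV"
    and "(\<lambda>x. \<Sum>\<^sub>\<infinity>y. norm (F (x,y))) summable_on UNIV"
proof -
  have "(\<lambda>p. norm (F p)) summable_on Sigma UNIV (\<lambda>_. UNIV)" using assms by simp
  then have *: "(\<forall>x\<in>UNIV. (\<lambda>y. norm (F (x, y))) summable_on UNIV) \<and>
             ((\<lambda>x. norm (infsum (\<lambda>y. norm (F (x, y))) UNIV)) summable_on UNIV)"
    using Infinite_Sum.abs_summable_on_Sigma_iff[of F UNIV "\<lambda>_. UNIV"] by simp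
  then show "(\<lambda>y. norm (F (x,y))) summable_on UNIV" by simp
  have "norm (infsum (\<lambda>y. norm (F (x, y))) UNIV) = infsum (\<lambda>y. norm (F (x, y))) UNIV" for x
    by (simp add: infsum_nonneg)
  with * show "(\<lambda>x. \<Sum>\<^sub>\<infinity>y. norm (F (x,y))) summable_on UNIV" by simp
qed

lemma bij_shift: "bij_betw (\<lambda>p::'g::group_add \<times> 'g. (snd p, - snd p + fst p)) UNIV UNIV"
  by (rule bij_betwI[where g="\<lambda>q. (fst q + snd q, fst q)"]) (auto simp: prod_eq_iff)

lemma conv_pair_abs:
  fixes a b :: "'g::group_add \<Rightarrow> complex"
  assumes "l1 a" "l1 b"
  shows "(\<lambda>p. norm (a (snd p) * b (- snd p + fst p))) summable_on UNIV"
proof -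
  have "(\<lambda>p. (\<lambda>q. norm (a (fst q)) * norm (b (snd q))) ((\<lambda>p. (snd p, - snd p + fst p)) p)) summable_on UNIV"
    using summable_on_reindex_bij_betw[OF bij_shift, of "\<lambda>q. norm (a (fst q)) * norm (b (snd q))"]
      prod_abs_summable[OF assms] by simp
  then show ?thesis by (simp add: norm_mult)
qed

lemma conv_slice:
  fixes a b :: "'g::group_add \<Rightarrow> complex"
  assumes "l1 a" "l1 b"
  shows "(\<lambda>h. norm (a h * b (-h+g))) summable_on UNIV"
  using sigma_parts(1)[of "\<lambda>p. a (snd p) * b (- snd p + fst p)", OF conv_pair_abs[OF assms], of g] by simp

lemma conv_slice_summable:
  fixes a b :: "'g::group_add \<Rightarrow> complex"
  assumes "l1 a" "l1 b"
  shows "(\<lambda>h. a h * b (-h+g)) summable_on UNIV"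
  by (rule Infinite_Sum.abs_summable_summable[OF conv_slice[OF assms]])

lemma l1_conv:
  fixes a b :: "'g::group_add \<Rightarrow> complex"
  assumes "l1 a" "l1 b"
  shows "l1 (conv a b)"
  unfolding l1_def
proof (rule summable_on_comparison_test)
  show "(\<lambda>g. \<Sum>\<^sub>\<infinity>h. norm (a h * b (-h+g))) summable_on UNIV"
    using sigma_parts(2)[of "\<lambda>p. a (snd p) * b (- snd p + fst p)", OF conv_pair_abs[OF assms]] by simp
  fix g show "norm (conv a b g) \<le> (\<Sum>\<^sub>\<infinity>h. norm (a h * b (-h+g)))"
    unfolding conv_def using conv_slice[OF assms] by (simp add: norm_infsum_bound)
qed simp

lemma eps_conv:
  fixes a b :: "'g::group_add \<Rightarrow> complex"
  assumes "l1 a" "l1 b"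
  shows "(\<Sum>\<^sub>\<infinity>g. conv a b g) = (\<Sum>\<^sub>\<infinity>g. a g) * (\<Sum>\<^sub>\<infinity>g. b g)"
proof -
  let ?F = "\<lambda>p. a (snd p) * b (- snd p + fst p)"
  have sF: "?F summable_on UNIV"
    by (rule Infinite_Sum.abs_summable_summable[OF conv_pair_abs[OF assms]])
  have "(\<Sum>\<^sub>\<infinity>g. conv a b g) = (\<Sum>\<^sub>\<infinity>g. \<Sum>\<^sub>\<infinity>h. (\<lambda>g h. ?F (g,h)) g h)"
    by (simp add: conv_def)
  also have "\<dots> = infsum (\<lambda>(g,h). ?F (g,h)) (Sigma UNIV (\<lambda>_. UNIV))"
    by (rule infsum_Sigma'_banach) (use sF in \<open>simp add: case_prod_unfold\<close>)
  also have "\<dots> = infsum ?F UNIV" by (simp add: case_prod_unfold)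
  also have "\<dots> = infsum (\<lambda>q. a (fst q) * b (snd q)) UNIV"
  proof -
    have "infsum (\<lambda>p. (\<lambda>q. a (fst q) * b (snd q)) ((\<lambda>p. (snd p, - snd p + fst p)) p)) UNIV
       = infsum (\<lambda>q. a (fst q) * b (snd q)) UNIV"
      by (rule infsum_reindex_bij_betw[OF bij_shift])
    then show ?thesis by simp
  qed
  also have "\<dots> = (\<Sum>\<^sub>\<infinity>h. \<Sum>\<^sub>\<infinity>k. (\<lambda>h k. a h * b k) h k)"
  proof -
    have "(\<lambda>q. norm (a (fst q) * b (snd q))) summable_on UNIV"
      using prod_abs_summable[OF assms] by (simp add: norm_mult)
    then have "(\<lambda>q. a (fst q) * b (snd q)) summable_on UNIV"
      by (rule Infinite_Sum.abs_summable_summable)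
    then have "(\<Sum>\<^sub>\<infinity>h. \<Sum>\<^sub>\<infinity>k. (\<lambda>h k. a h * b k) h k) = infsum (\<lambda>(h,k). a h * b k) (Sigma UNIV (\<lambda>_. UNIV))"
      by (intro infsum_Sigma'_banach) (simp add: case_prod_unfold)
    then show ?thesis by (simp add: case_prod_unfold)
  qed
  also have "\<dots> = (\<Sum>\<^sub>\<infinity>h. a h * (\<Sum>\<^sub>\<infinity>k. b k))"
    by (simp add: infsum_cmult_right')
  also have "\<dots> = (\<Sum>\<^sub>\<infinity>g. a g) * (\<Sum>\<^sub>\<infinity>g. b g)"
    by (simp add: infsum_cmult_left')
  finally show ?thesis .
qed

lemma bij_shift2: "bij_betw (\<lambda>p::'g::group_add \<times> 'g. (fst p, - fst p + snd p)) UNIV UNIV"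
  by (rule bij_betwI[where g="\<lambda>q. (fst q, fst q + snd q)"]) (auto simp: prod_eq_iff)

lemma bij_left: "bij_betw (\<lambda>k::'g::group_add. h + k) UNIV UNIV"
  by (rule bij_betwI[where g="\<lambda>k. - h + k"]) auto

lemma bij_uminus': "bij_betw (\<lambda>k::'g::group_add. - k) UNIV UNIV"
  by (rule bij_betwI[where g="\<lambda>k. - k"]) auto

lemma conv_pair_abs2:
  fixes a b :: "'g::group_add \<Rightarrow> complex"
  assumes "l1 a" "l1 b"
  shows "(\<lambda>p. norm (a (fst p) * b (- fst p + snd p))) summable_on UNIV"
proof -
  have "(\<lambda>p. (\<lambda>q. norm (a (fst q)) * norm (b (snd q))) ((\<lambda>p. (fst p, - fst p + snd p)) p)) summable_on UNIV"
    using summable_on_reindex_bij_betw[OF bij_shift2, of "\<lambda>q. norm (a (fst q)) * norm (b (snd q))"]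
      prod_abs_summable[OF assms] by simp
  then show ?thesis by (simp add: norm_mult)
qed

lemma conv_assoc:
  fixes a b c :: "'g::group_add \<Rightarrow> complex"
  assumes a: "l1 a" and b: "l1 b" and c: "l1 c"
  shows "conv (conv a b) c = conv a (conv b c)"
proof
  fix g
  define T where "T = (\<lambda>h k. a h * b (- h + k) * c (- k + g))"
  define C where "C = (\<Sum>\<^sub>\<infinity>y. norm (c y))"
  have nT: "(\<lambda>p. norm (T (fst p) (snd p))) summable_on UNIV"
  proof (rule summable_on_comparison_test)
    show "(\<lambda>p. norm (a (fst p) * b (- fst p + snd p)) * C) summable_on UNIV"
      using conv_pair_abs2[OF a b] by (rule summable_on_cmult_left)
    fix p :: "'g \<times> 'g"
    have "norm (c (- snd p + g)) \<le> C" unfolding C_def by (rule l1_norm_le[OF c])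
    then show "norm (T (fst p) (snd p)) \<le> norm (a (fst p) * b (- fst p + snd p)) * C"
      unfolding T_def by (simp add: norm_mult mult_left_mono)
  qed simp
  have sT: "(\<lambda>(h,k). T h k) summable_on UNIV \<times> UNIV"
    using Infinite_Sum.abs_summable_summable[OF nT] by (simp add: case_prod_unfold)
  have "conv (conv a b) c g = (\<Sum>\<^sub>\<infinity>k. (\<Sum>\<^sub>\<infinity>h. a h * b (- h + k)) * c (- k + g))"
    by (simp add: conv_def)
  also have "\<dots> = (\<Sum>\<^sub>\<infinity>k. \<Sum>\<^sub>\<infinity>h. T h k)"
    unfolding T_def by (simp add: infsum_cmult_left')
  also have "\<dots> = (\<Sum>\<^sub>\<infinity>h. \<Sum>\<^sub>\<infinity>k. T h k)"
    using infsum_swap_banach[OF sT] by simp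
  also have "\<dots> = (\<Sum>\<^sub>\<infinity>h. a h * (\<Sum>\<^sub>\<infinity>m. b m * c (- m + (- h + g))))"
  proof (rule infsum_cong)
    fix h
    have "(\<Sum>\<^sub>\<infinity>m. b m * c (- m + (- h + g))) = (\<Sum>\<^sub>\<infinity>k. (\<lambda>m. b m * c (- m + (- h + g))) (- h + k))"
      by (rule infsum_reindex_bij_betw[OF bij_left, symmetric])
    also have "\<dots> = (\<Sum>\<^sub>\<infinity>k. b (- h + k) * c (- k + g))"
      by (simp add: minus_add add.assoc)
    finally show "(\<Sum>\<^sub>\<infinity>k. T h k) = a h * (\<Sum>\<^sub>\<infinity>m. b m * c (- m + (- h + g)))"
      unfolding T_def by (simp add: infsum_cmult_right'[symmetric] mult.assoc)
  qed
  also have "\<dots> = conv a (conv b c) g"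
    by (simp add: conv_def)
  finally show "conv (conv a b) c g = conv a (conv b c) g" .
qed

lemma conv_trace:
  fixes a b :: "'g::group_add \<Rightarrow> complex"
  shows "conv a b 0 = conv b a 0"
proof -
  have "conv b a 0 = (\<Sum>\<^sub>\<infinity>h. b h * a (- h))" by (simp add: conv_def)
  also have "\<dots> = (\<Sum>\<^sub>\<infinity>k. (\<lambda>h. b h * a (- h)) (- k))"
    by (rule infsum_reindex_bij_betw[OF bij_uminus', symmetric])
  also have "\<dots> = conv a b 0" by (simp add: conv_def mult.commute)
  finally show ?thesis by simp
qed

lemma conv_one_left: "conv l1_one b = b"
proof
  fix g
  have "conv l1_one b g = (\<Sum>\<^sub>\<infinity>h\<in>UNIV. (if h = 0 then 1 else 0) * b (- h + g))"
    by (simp add: conv_def l1_one_def)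
  also have "\<dots> = (\<Sum>\<^sub>\<infinity>h\<in>{0}. (if h = 0 then 1 else 0) * b (- h + g))"
    by (rule infsum_cong_neutral) auto
  finally show "conv l1_one b g = b g" by simp
qed

lemma neg_add_zero_iff: "(- h + g = (0::'g::group_add)) = (h = g)"
  by (metis add_minus_cancel add.right_neutral)

lemma conv_one_right: "conv b l1_one = b"
proof
  fix g
  have "conv b l1_one g = (\<Sum>\<^sub>\<infinity>h\<in>UNIV. b h * (if - h + g = 0 then 1 else 0))"
    by (simp add: conv_def l1_one_def)
  also have "\<dots> = (\<Sum>\<^sub>\<infinity>h\<in>{g}. b h * (if - h + g = 0 then 1 else 0))"
    by (rule infsum_cong_neutral) (auto simp: neg_add_zero_iff)
  finally show "conv b l1_one g = b g" by simp
qed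

definition star :: "('g::group_add \<Rightarrow> complex) \<Rightarrow> 'g \<Rightarrow> complex" where
  "star a = (\<lambda>g. cnj (a (- g)))"

lemma l1_star: "l1 a \<Longrightarrow> l1 (star a)"
  unfolding l1_def star_def
  using summable_on_reindex_bij_betw[OF bij_uminus', of "\<lambda>g. norm (a g)"] by simp

lemma star_star: "star (star a) = a"
  by (simp add: star_def)

lemma star_conv:
  fixes a b :: "'g::group_add \<Rightarrow> complex"
  shows "star (conv a b) = conv (star b) (star a)"
proof
  fix g
  have "conv (star b) (star a) g = (\<Sum>\<^sub>\<infinity>k. cnj (b (- k)) * cnj (a (- g + k)))"
    by (simp add: conv_def star_def minus_add)
  also have "\<dots> = (\<Sum>\<^sub>\<infinity>h. (\<lambda>k. cnj (b (- k)) * cnj (a (- g + k))) (g + h))"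
    by (rule infsum_reindex_bij_betw[OF bij_left, symmetric])
  also have "\<dots> = (\<Sum>\<^sub>\<infinity>h. cnj (a h * b (- h + - g)))"
    by (simp add: minus_add mult.commute)
  also have "\<dots> = star (conv a b) g"
    unfolding star_def conv_def by (subst infsum_cnj[symmetric]) (simp add: minus_add)
  finally show "star (conv a b) g = conv (star b) (star a) g" by simp
qed

lemma l1_zero: "l1 (\<lambda>_. 0)" by (simp add: l1_def)

lemma l1_add: "l1 a \<Longrightarrow> l1 b \<Longrightarrow> l1 (\<lambda>g. a g + b g)"
  unfolding l1_def
  by (rule summable_on_comparison_test[where f="\<lambda>g. norm (a g) + norm (b g)"])
     (auto intro: summable_on_add norm_triangle_ineq)

lemma l1_scale: "l1 a \<Longrightarrow> l1 (\<lambda>g. z * a g)"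
  unfolding l1_def by (simp add: norm_mult summable_on_cmult_right)

lemma l1_uminus: "l1 a \<Longrightarrow> l1 (\<lambda>g. - a g)"
  unfolding l1_def by simp

lemma l1_diff: "l1 a \<Longrightarrow> l1 b \<Longrightarrow> l1 (\<lambda>g. a g - b g)"
  using l1_add[of a "\<lambda>g. - b g"] l1_uminus[of b] by simp

lemma l1_one: "l1 (l1_one :: 'g::group_add \<Rightarrow> complex)"
  unfolding l1_def
  by (subst summable_on_cong_neutral[where T="{0}"]) (auto simp: l1_one_def)

lemma conv_add_left:
  fixes a b c :: "'g::group_add \<Rightarrow> complex"
  assumes "l1 a" "l1 b" "l1 c"
  shows "conv (\<lambda>g. a g + b g) c = (\<lambda>g. conv a c g + conv b c g)"
  unfolding conv_def
  by (simp add: distrib_right infsum_add conv_slice_summable assms)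

lemma conv_add_right:
  fixes a b c :: "'g::group_add \<Rightarrow> complex"
  assumes "l1 a" "l1 b" "l1 c"
  shows "conv c (\<lambda>g. a g + b g) = (\<lambda>g. conv c a g + conv c b g)"
  unfolding conv_def
  by (simp add: distrib_left infsum_add conv_slice_summable assms)

lemma conv_scale_left:
  "conv (\<lambda>g. z * a g) c = (\<lambda>g. z * conv a c g)"
  unfolding conv_def by (simp add: mult.assoc infsum_cmult_right')

lemma conv_scale_right:
  "conv c (\<lambda>g. z * a g) = (\<lambda>g. z * conv c a g)"
  unfolding conv_def by (simp add: mult.left_commute infsum_cmult_right')

lemma conv_uminus_left: "conv (\<lambda>g. - a g) c = (\<lambda>g. - conv a c g)"
  unfolding conv_def by (simp add: infsum_uminus)

lemma conv_uminus_right: "conv c (\<lambda>g. - a g) = (\<lambda>g. - conv c a g)"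
  unfolding conv_def by (simp add: infsum_uminus)

typedef 'g l1f = "{a :: 'g \<Rightarrow> complex. l1 a}"
  morphisms rep Abs_l1f
  by (rule exI[of _ "\<lambda>_. 0"]) (simp add: l1_zero)

setup_lifting type_definition_l1f

lemma l1_rep: "l1 (rep x)" using rep by auto

instantiation l1f :: (group_add) ring_1
begin
lift_definition zero_l1f :: "'a l1f" is "\<lambda>_. 0" by (simp add: l1_zero)
lift_definition one_l1f :: "'a l1f" is "l1_one" by (simp add: l1_one)
lift_definition plus_l1f :: "'a l1f \<Rightarrow> 'a l1f \<Rightarrow> 'a l1f" is "\<lambda>a b g. a g + b g" by (simp add: l1_add)
lift_definition uminus_l1f :: "'a l1f \<Rightarrow> 'a l1f" is "\<lambda>a g. - a g" by (simp add: l1_uminus)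
lift_definition minus_l1f :: "'a l1f \<Rightarrow> 'a l1f \<Rightarrow> 'a l1f" is "\<lambda>a b g. a g - b g" by (simp add: l1_diff)
lift_definition times_l1f :: "'a l1f \<Rightarrow> 'a l1f \<Rightarrow> 'a l1f" is conv by (simp add: l1_conv)
instance
proof
  fix a b c :: "'a l1f"
  show "a * b * c = a * (b * c)" by transfer (simp add: conv_assoc)
  show "a + b + c = a + (b + c)" by transfer (simp add: add.assoc)
  show "a + b = b + a" by transfer (simp add: add.commute)
  show "0 + a = a" by transfer simp
  show "- a + a = 0" by transfer simp
  show "a - b = a + - b" by transfer simp
  show "(a + b) * c = a * c + b * c" by transfer (simp add: conv_add_left)
  show "a * (b + c) = a * b + a * c" by transfer (simp add: conv_add_right)
  show "1 * a = a" by transfer (simp add: conv_one_left)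
  show "a * 1 = a" by transfer (simp add: conv_one_right)
  show "(0::'a l1f) \<noteq> 1"
  proof transfer
    show "(\<lambda>_. 0) \<noteq> (l1_one :: 'a \<Rightarrow> complex)"
      by (metis l1_one_def zero_neq_one)
  qed
qed
end

instantiation l1f :: (group_add) real_algebra_1
begin
lift_definition scaleR_l1f :: "real \<Rightarrow> 'a l1f \<Rightarrow> 'a l1f" is "\<lambda>r a g. complex_of_real r * a g"
  by (simp add: l1_scale)
instance
proof
  fix a b :: "'a l1f" and r s :: real
  show "r *\<^sub>R (a + b) = r *\<^sub>R a + r *\<^sub>R b" by transfer (simp add: distrib_left)
  show "(r + s) *\<^sub>R a = r *\<^sub>R a + s *\<^sub>R a" by transfer (simp add: distrib_right)
  show "r *\<^sub>R s *\<^sub>R a = (r * s) *\<^sub>R a" by transfer (simp add: mult.assoc)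
  show "1 *\<^sub>R a = a" by transfer simp
  show "r *\<^sub>R a * b = r *\<^sub>R (a * b)" by transfer (simp add: conv_scale_left)
  show "a * r *\<^sub>R b = r *\<^sub>R (a * b)" by transfer (simp add: conv_scale_right)
qed
end

lift_definition st :: "'g::group_add l1f \<Rightarrow> 'g l1f" is star by (simp add: l1_star)

definition tr :: "'g::group_add l1f \<Rightarrow> complex" where "tr x = rep x 0"
definition eps :: "'g::group_add l1f \<Rightarrow> complex" where "eps x = (\<Sum>\<^sub>\<infinity>g. rep x g)"
definition ip :: "'g::group_add l1f \<Rightarrow> 'g l1f \<Rightarrow> complex" where "ip x y = tr (x * st y)"
definition n1 :: "'g::group_add l1f \<Rightarrow> real" where "n1 x = (\<Sum>\<^sub>\<infinity>g. norm (rep x g))"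
definition nn :: "'g::group_add l1f \<Rightarrow> real" where "nn x = Re (ip x x)"

lemma rep_plus: "rep (x + y) g = rep x g + rep y g" by transfer simp
lemma rep_minus: "rep (x - y) g = rep x g - rep y g" by transfer simp
lemma rep_uminus: "rep (- x) g = - rep x g" by transfer simp
lemma rep_zero: "rep 0 g = 0" by transfer simp
lemma rep_one: "rep 1 g = l1_one g" by transfer simp
lemma rep_times: "rep (x * y) = conv (rep x) (rep y)" by transfer simp
lemma rep_scaleR: "rep (r *\<^sub>R x) g = complex_of_real r * rep x g" by transfer simp
lemma rep_st: "rep (st x) = star (rep x)" by transfer simp

lemma tr_plus: "tr (x + y) = tr x + tr y" by (simp add: tr_def rep_plus)
lemma tr_minus: "tr (x - y) = tr x - tr y" by (simp add: tr_def rep_minus)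
lemma tr_scaleR: "tr (r *\<^sub>R x) = complex_of_real r * tr x" by (simp add: tr_def rep_scaleR)
lemma tr_one: "tr 1 = 1" by (simp add: tr_def rep_one l1_one_def)
lemma tr_sum: "tr (sum f A) = (\<Sum>k\<in>A. tr (f k))"
  by (induction A rule: infinite_finite_induct) (auto simp: tr_def rep_zero rep_plus)
lemma tr_comm: "tr (x * y) = tr (y * x)" by (simp add: tr_def rep_times conv_trace)
lemma tr_st: "tr (st x) = cnj (tr x)" by (simp add: tr_def rep_st star_def)

lemma st_st: "st (st x) = x" by transfer (simp add: star_star)
lemma st_mult: "st (x * y) = st y * st x" by transfer (simp add: star_conv)
lemma st_plus: "st (x + y) = st x + st y" by transfer (simp add: star_def)
lemma st_minus: "st (x - y) = st x - st y" by transfer (simp add: star_def)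
lemma st_one: "st 1 = (1 :: 'g::group_add l1f)" by transfer (auto simp: star_def l1_one_def)
lemma st_scaleR: "st (r *\<^sub>R x) = r *\<^sub>R st x" by transfer (simp add: star_def)
lemma st_power: "st (x ^ n) = st x ^ n"
  by (induction n) (simp_all add: st_one st_mult power_commutes)
lemma st_zero: "st 0 = (0 :: 'g::group_add l1f)" by transfer (simp add: star_def)
lemma st_sum: "st (sum f A) = (\<Sum>k\<in>A. st (f k))"
  by (induction A rule: infinite_finite_induct) (simp_all add: st_zero st_plus)

lemma eps_mult: "eps (x * y) = eps x * eps y"
  by (simp add: eps_def rep_times eps_conv l1_rep)
lemma ip_adj: "ip (y * a) b = ip a (st y * b)"
proof -
  have "ip (y * a) b = tr (y * (a * st b))" by (simp add: ip_def mult.assoc)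
  also have "\<dots> = tr (a * st b * y)" by (rule tr_comm)
  also have "\<dots> = ip a (st y * b)" by (simp add: ip_def st_mult st_st mult.assoc)
  finally show ?thesis .
qed

lemma ip_plus_left: "ip (x + y) z = ip x z + ip y z" by (simp add: ip_def distrib_right tr_plus)
lemma ip_minus_left: "ip (x - y) z = ip x z - ip y z" by (simp add: ip_def left_diff_distrib tr_minus)
lemma ip_scaleR_left: "ip (r *\<^sub>R x) z = complex_of_real r * ip x z" by (simp add: ip_def tr_scaleR)
lemma ip_one_left: "ip 1 z = tr (st z)" by (simp add: ip_def)
lemma ip_sum_left: "ip (sum f A) z = (\<Sum>k\<in>A. ip (f k) z)"
  by (simp add: ip_def sum_distrib_right tr_sum)

lemma l1_sq:
  assumes "l1 a" shows "(\<lambda>g. (norm (a g))\<^sup>2) summable_on UNIV"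
proof (rule summable_on_comparison_test)
  show "(\<lambda>g. norm (a g) * (\<Sum>\<^sub>\<infinity>y. norm (a y))) summable_on UNIV"
    using assms unfolding l1_def by (rule summable_on_cmult_left)
  fix g show "(norm (a g))\<^sup>2 \<le> norm (a g) * (\<Sum>\<^sub>\<infinity>y. norm (a y))"
    using l1_norm_le[OF assms, of g] by (simp add: power2_eq_square mult_left_mono)
qed simp

lemma ip_raw: "ip x y = (\<Sum>\<^sub>\<infinity>g. rep x g * cnj (rep y g))"
proof -
  have "ip x y = (\<Sum>\<^sub>\<infinity>h. rep x h * cnj (rep y (- (- h + 0))))"
    by (simp add: ip_def tr_def rep_times rep_st conv_def star_def)
  then show ?thesis by simp
qed

lemma nn_raw: "nn x = (\<Sum>\<^sub>\<infinity>g. (norm (rep x g))\<^sup>2)"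
proof -
  have s: "(\<lambda>g. rep x g * cnj (rep x g)) summable_on UNIV"
  proof (rule Infinite_Sum.abs_summable_summable)
    show "(\<lambda>g. norm (rep x g * cnj (rep x g))) summable_on UNIV"
      using l1_sq[OF l1_rep[of x]] by (simp add: norm_mult power2_eq_square)
  qed
  have "nn x = Re (\<Sum>\<^sub>\<infinity>g. rep x g * cnj (rep x g))"
    by (simp only: nn_def ip_raw)
  also have "\<dots> = (\<Sum>\<^sub>\<infinity>g. Re (rep x g * cnj (rep x g)))"
    by (rule infsum_Re[OF s, symmetric])
  also have "\<dots> = (\<Sum>\<^sub>\<infinity>g. (norm (rep x g))\<^sup>2)"
    by (rule infsum_cong) (simp add: complex_mult_cnj cmod_def)
  finally show ?thesis .
qed

lemma nn_nonneg: "0 \<le> nn x"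
  by (simp add: nn_raw infsum_nonneg)

lemma nn_term: "(norm (rep x g))\<^sup>2 \<le> nn x"
proof -
  have "(\<Sum>\<^sub>\<infinity>y\<in>{g}. (norm (rep x y))\<^sup>2) \<le> (\<Sum>\<^sub>\<infinity>y. (norm (rep x y))\<^sup>2)"
    by (rule infsum_mono_neutral) (use l1_sq[OF l1_rep[of x]] in auto)
  then show ?thesis by (simp add: nn_raw)
qed

lemma nn_zero_imp: "nn x = 0 \<Longrightarrow> x = 0"
proof -
  assume "nn x = 0"
  then have "rep x g = 0" for g using nn_term[of x g] by simp
  then show "x = 0" by transfer auto
qed

lemma tr_sq_le: "(norm (tr x))\<^sup>2 \<le> nn x"
  unfolding tr_def by (rule nn_term)

lemma n1_nonneg: "0 \<le> n1 x" by (simp add: n1_def infsum_nonneg)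

lemma infsum_mono_nonneg:
  fixes f g :: "'a \<Rightarrow> real"
  assumes "g summable_on A" "\<And>x. x \<in> A \<Longrightarrow> 0 \<le> f x" "\<And>x. x \<in> A \<Longrightarrow> f x \<le> g x"
  shows "infsum f A \<le> infsum g A"
proof -
  have "f summable_on A" using summable_on_comparison_test[of g A f] assms by blast
  then show ?thesis using assms infsum_mono by blast
qed

lemma young_inner:
  fixes A :: "'g::group_add \<Rightarrow> complex"
  assumes A: "l1 A"
  shows "(\<Sum>\<^sub>\<infinity>g. norm (A (- h + g)) * norm (A g)) \<le> (\<Sum>\<^sub>\<infinity>g. (norm (A g))\<^sup>2)"
proof -
  have s1: "(\<lambda>g. (norm (A g))\<^sup>2) summable_on UNIV" by (rule l1_sq[OF A])
  have s2: "(\<lambda>g. (norm (A (- h + g)))\<^sup>2) summable_on UNIV"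
    using summable_on_reindex_bij_betw[OF bij_left, of "\<lambda>g. (norm (A g))\<^sup>2" "- h"] s1 by simp
  have e2: "(\<Sum>\<^sub>\<infinity>g. (norm (A (- h + g)))\<^sup>2) = (\<Sum>\<^sub>\<infinity>g. (norm (A g))\<^sup>2)"
    using infsum_reindex_bij_betw[OF bij_left, of "\<lambda>g. (norm (A g))\<^sup>2" "- h"] by simp
  have "(\<Sum>\<^sub>\<infinity>g. norm (A (- h + g)) * norm (A g))
      \<le> (\<Sum>\<^sub>\<infinity>g. (1/2) * ((norm (A (- h + g)))\<^sup>2 + (norm (A g))\<^sup>2))"
  proof (rule infsum_mono_nonneg)
    show "(\<lambda>g. (1/2) * ((norm (A (- h + g)))\<^sup>2 + (norm (A g))\<^sup>2)) summable_on UNIV"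
      by (rule summable_on_cmult_right[OF summable_on_add[OF s2 s1]])
    fix g
    show "0 \<le> norm (A (- h + g)) * norm (A g)" by simp
    have "0 \<le> (norm (A (- h + g)) - norm (A g))\<^sup>2" by simp
    then show "norm (A (- h + g)) * norm (A g) \<le> (1/2) * ((norm (A (- h + g)))\<^sup>2 + (norm (A g))\<^sup>2)"
      by (simp add: power2_eq_square algebra_simps)
  qed
  also have "\<dots> = (1/2) * (\<Sum>\<^sub>\<infinity>g. (norm (A (- h + g)))\<^sup>2 + (norm (A g))\<^sup>2)"
    by (rule infsum_cmult_right')
  also have "\<dots> = (1/2) * ((\<Sum>\<^sub>\<infinity>g. (norm (A (- h + g)))\<^sup>2) + (\<Sum>\<^sub>\<infinity>g. (norm (A g))\<^sup>2))"
    by (simp only: infsum_add[OF s2 s1])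
  also have "\<dots> = (\<Sum>\<^sub>\<infinity>g. (norm (A g))\<^sup>2)" by (simp add: e2)
  finally show ?thesis .
qed


lemma young:
  fixes y a :: "'g::group_add l1f"
  shows "Re (ip (y * a) a) \<le> n1 y * nn a"
proof -
  define Y where "Y = rep y"
  define A where "A = rep a"
  have Y: "l1 Y" and A: "l1 A" by (simp_all add: Y_def A_def l1_rep)
  define na where "na = (\<Sum>\<^sub>\<infinity>g. norm (A g))"
  have nA: "norm (A g) \<le> na" for g unfolding na_def by (rule l1_norm_le[OF A])
  have na0: "0 \<le> na" unfolding na_def by (simp add: infsum_nonneg)
  define S where "S = (\<lambda>g. \<Sum>\<^sub>\<infinity>h. norm (Y h * A (- h + g)))"
  have sS: "S summable_on UNIV"
    unfolding S_def using sigma_parts(2)[of "\<lambda>p. Y (snd p) * A (- snd p + fst p)", OF conv_pair_abs[OF Y A]] by simp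
  have cA: "l1 (conv Y A)" by (rule l1_conv[OF Y A])
  have ipe: "ip (y * a) a = (\<Sum>\<^sub>\<infinity>g. conv Y A g * cnj (A g))"
    by (simp add: ip_raw rep_times Y_def A_def)
  have s0: "(\<lambda>g. norm (conv Y A g) * na) summable_on UNIV"
    using cA unfolding l1_def by (rule summable_on_cmult_left)
  have s1: "(\<lambda>g. norm (conv Y A g * cnj (A g))) summable_on UNIV"
    by (rule summable_on_comparison_test[OF s0]) (auto simp: norm_mult intro: mult_left_mono nA)
  have "Re (ip (y * a) a) \<le> norm (ip (y * a) a)" by (rule complex_Re_le_cmod)
  also have "\<dots> \<le> (\<Sum>\<^sub>\<infinity>g. norm (conv Y A g * cnj (A g)))"
    unfolding ipe by (rule norm_infsum_bound[OF s1])
  also have "\<dots> \<le> (\<Sum>\<^sub>\<infinity>g. S g * norm (A g))"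
  proof (rule infsum_mono_nonneg)
    show "(\<lambda>g. S g * norm (A g)) summable_on UNIV"
      by (rule summable_on_comparison_test[OF summable_on_cmult_left[OF sS, of na]])
         (auto simp: S_def infsum_nonneg intro: mult_left_mono nA)
    fix g
    show "0 \<le> norm (conv Y A g * cnj (A g))" by simp
    have "norm (conv Y A g) \<le> S g"
      unfolding conv_def S_def by (rule norm_infsum_bound[OF conv_slice[OF Y A]])
    then show "norm (conv Y A g * cnj (A g)) \<le> S g * norm (A g)"
      by (simp add: norm_mult mult_right_mono)
  qed
  also have "\<dots> = (\<Sum>\<^sub>\<infinity>g. \<Sum>\<^sub>\<infinity>h. norm (Y h) * norm (A (- h + g)) * norm (A g))"
    unfolding S_def by (simp add: infsum_cmult_left'[symmetric] norm_mult)
  also have "\<dots> = (\<Sum>\<^sub>\<infinity>h. \<Sum>\<^sub>\<infinity>g. norm (Y h) * norm (A (- h + g)) * norm (A g))"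
  proof (rule infsum_swap_banach)
    have "(\<lambda>p. norm (Y (snd p) * A (- snd p + fst p)) * na) summable_on UNIV"
      by (rule summable_on_cmult_left[OF conv_pair_abs[OF Y A]])
    then have "(\<lambda>p. norm (Y (snd p)) * norm (A (- snd p + fst p)) * norm (A (fst p))) summable_on UNIV"
      by (rule summable_on_comparison_test) (auto simp: norm_mult intro: mult_left_mono nA)
    then show "(\<lambda>(g, h). norm (Y h) * norm (A (- h + g)) * norm (A g)) summable_on UNIV \<times> UNIV"
      by (simp add: case_prod_unfold)
  qed
  also have "\<dots> \<le> (\<Sum>\<^sub>\<infinity>h. norm (Y h) * nn a)"
  proof (rule infsum_mono_nonneg)
    show "(\<lambda>h. norm (Y h) * nn a) summable_on UNIV"
      using Y unfolding l1_def by (rule summable_on_cmult_left)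
    fix h
    show "0 \<le> (\<Sum>\<^sub>\<infinity>g. norm (Y h) * norm (A (- h + g)) * norm (A g))"
      by (simp add: infsum_nonneg)
    have "(\<Sum>\<^sub>\<infinity>g. norm (Y h) * norm (A (- h + g)) * norm (A g))
        = norm (Y h) * (\<Sum>\<^sub>\<infinity>g. norm (A (- h + g)) * norm (A g))"
      by (simp add: infsum_cmult_right'[symmetric] mult.assoc)
    also have "\<dots> \<le> norm (Y h) * nn a"
      using young_inner[OF A, of h] by (simp add: nn_raw A_def mult_left_mono)
    finally show "(\<Sum>\<^sub>\<infinity>g. norm (Y h) * norm (A (- h + g)) * norm (A g)) \<le> norm (Y h) * nn a" .
  qed
  also have "\<dots> = n1 y * nn a"
    by (simp add: n1_def Y_def infsum_cmult_left')
  finally show ?thesis .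
qed

lemma geom_ring: "(1 - r) * (\<Sum>k<N. r ^ k) = 1 - r ^ N" for r :: "'a::ring_1"
proof (induction N)
  case 0 then show ?case by simp
next
  case (Suc N)
  have "(1 - r) * (\<Sum>k<Suc N. r ^ k) = (1 - r) * (\<Sum>k<N. r ^ k) + (1 - r) * r ^ N"
    by (simp add: distrib_left)
  also have "\<dots> = 1 - r ^ Suc N" using Suc by (simp add: algebra_simps)
  finally show ?case .
qed

lemma ip_conj: "ip a b = cnj (ip b a)"
  by (simp add: ip_def tr_st[symmetric] st_mult st_st)

lemma Re_ip_self: "Re (ip w w) = nn w" by (simp add: nn_def)

lemma pos_powers:
  fixes r e :: "'g::group_add l1f"
  assumes sr: "st r = r" and pos: "\<And>w. 0 \<le> Re (ip (r * w) w)"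
  shows "0 \<le> Re (ip (r ^ k * e) e)"
proof (cases "even k")
  case True
  then obtain j where "k = 2 * j" using evenE by blast
  then have k: "k = j + j" by simp
  have "r ^ k * e = r ^ j * (r ^ j * e)" by (simp add: k power_add mult.assoc)
  then have "ip (r ^ k * e) e = ip (r ^ j * e) (r ^ j * e)"
    by (simp add: ip_adj st_power sr)
  then show ?thesis using nn_nonneg[of "r ^ j * e"] by (simp add: nn_def)
next
  case False
  then obtain j where "k = 2 * j + 1" using oddE by blast
  then have k: "k = j + (Suc 0 + j)" by simp
  have "r ^ k * e = r ^ j * (r * (r ^ j * e))"
    by (simp add: k power_add mult.assoc[symmetric] power_commutes)
  then have "ip (r ^ k * e) e = ip (r * (r ^ j * e)) (r ^ j * e)"
    by (simp add: ip_adj st_power sr)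
  then show ?thesis using pos by simp
qed

lemma idem_algebra:
  fixes e f :: "'a::ring_1"
  assumes ee: "e * e = e" and ff: "f * f = f"
  shows "(e + f - 1) * (e + f - 1) = 1 + (e - f) * (f - e)"
    and "e * ((e + f - 1) * (e + f - 1)) = e * f * e"
    and "((e + f - 1) * (e + f - 1)) * e = e * f * e"
proof -
  have eey: "e * (e * y) = e * y" for y by (simp add: mult.assoc[symmetric] ee)
  have ffy: "f * (f * y) = f * y" for y by (simp add: mult.assoc[symmetric] ff)
  show "(e + f - 1) * (e + f - 1) = 1 + (e - f) * (f - e)"
    by (simp add: algebra_simps ee ff)
  show "e * ((e + f - 1) * (e + f - 1)) = e * f * e"
    by (simp add: algebra_simps ee ff eey ffy)
  show "((e + f - 1) * (e + f - 1)) * e = e * f * e"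
    by (simp add: algebra_simps ee ff eey ffy)
qed


lemma idem_tr_zero:
  fixes e :: "'g::group_add l1f"
  assumes ee: "e * e = e" and t0: "tr e = 0"
  shows "e = 0"
proof -
  define f where "f = st e"
  have ff: "f * f = f" unfolding f_def by (metis ee st_mult)
  define s where "s = e + f - 1"
  have sts: "st s = s" by (simp add: s_def f_def st_plus st_minus st_one st_st add.commute)
  define s2 where "s2 = s * s"
  have sts2: "st s2 = s2" by (simp add: s2_def st_mult sts)
  define x where "x = e - f"
  have stx: "st x = f - e" by (simp add: x_def f_def st_minus st_st)
  have "s2 = 1 + x * (f - e)"
    unfolding s2_def s_def x_def by (rule idem_algebra(1)[OF ee ff])
  then have s2x: "s2 = 1 + x * st x" by (simp only: stx)
  have es2: "e * s2 = e * f * e" unfolding s2_def s_def by (rule idem_algebra(2)[OF ee ff])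
  have s2e: "s2 * e = e * f * e" unfolding s2_def s_def by (rule idem_algebra(3)[OF ee ff])
  define K where "K = max 1 (n1 s2)"
  have K1: "1 \<le> K" by (simp add: K_def)
  define c where "c = 1 / K"
  have c0: "0 < c" and c1: "c \<le> 1" and cK: "c * K = 1" using K1 by (auto simp: c_def)
  define r where "r = 1 - c *\<^sub>R s2"
  have str: "st r = r" by (simp add: r_def st_minus st_one st_scaleR sts2)
  have re: "r * e = e * r" by (simp add: r_def algebra_simps es2 s2e)
  have lo: "nn w \<le> Re (ip (s2 * w) w)" for w
  proof -
    have "ip (s2 * w) w = ip w w + ip (x * (st x * w)) w"
      by (simp add: s2x distrib_right ip_plus_left mult.assoc)
    also have "ip (x * (st x * w)) w = ip (st x * w) (st x * w)" by (simp add: ip_adj)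
    finally have "Re (ip (s2 * w) w) = nn w + nn (st x * w)" by (simp add: nn_def)
    then show ?thesis using nn_nonneg[of "st x * w"] by simp
  qed
  have hi: "Re (ip (s2 * w) w) \<le> K * nn w" for w
  proof -
    have "Re (ip (s2 * w) w) \<le> n1 s2 * nn w" by (rule young)
    also have "\<dots> \<le> K * nn w" by (rule mult_right_mono) (auto simp: K_def nn_nonneg)
    finally show ?thesis .
  qed
  have ipr: "ip (r * w) v = ip w v - complex_of_real c * ip (s2 * w) v" for w v
    by (simp add: r_def left_diff_distrib ip_minus_left ip_scaleR_left)
  have pos: "0 \<le> Re (ip (r * w) w)" for w
  proof -
    have "Re (ip (r * w) w) = nn w - c * Re (ip (s2 * w) w)" by (simp add: ipr nn_def)
    moreover have "c * Re (ip (s2 * w) w) \<le> c * (K * nn w)" using hi[of w] c0 by simp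
    moreover have "c * (K * nn w) = nn w" using cK by (simp add: mult.assoc[symmetric])
    ultimately show ?thesis by linarith
  qed
  have contr: "nn (r * w) \<le> (1 - c) * nn w" for w
  proof -
    define P where "P = Re (ip (s2 * w) w)"
    have "ip (r * w) (r * w) = ip (r * (r * w)) w" by (simp add: ip_adj str)
    also have "\<dots> = ip (r * w) w - complex_of_real c * ip (s2 * (r * w)) w" by (rule ipr)
    also have "ip (s2 * (r * w)) w = ip (r * (s2 * w)) w"
    proof -
      have "s2 * r = r * s2" by (simp add: r_def algebra_simps)
      then show ?thesis by (simp add: mult.assoc[symmetric])
    qed
    also have "ip (r * (s2 * w)) w = ip (s2 * w) w - complex_of_real c * ip (s2 * (s2 * w)) w"
      by (rule ipr)
    finally have eq0: "ip (r * w) (r * w) = ip (r * w) w - complex_of_real c *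
        (ip (s2 * w) w - complex_of_real c * ip (s2 * (s2 * w)) w)" .
    have "nn (r * w) = Re (ip (r * w) w - complex_of_real c *
        (ip (s2 * w) w - complex_of_real c * ip (s2 * (s2 * w)) w))"
      unfolding nn_def eq0 ..
    then have eq: "nn (r * w) = Re (ip (r * w) w) - c * P + c * c * Re (ip (s2 * (s2 * w)) w)"
      by (simp add: P_def algebra_simps)
    have "Re (ip (s2 * (s2 * w)) w) = nn (s2 * w)" by (simp add: ip_adj sts2 nn_def)
    also have "nn (s2 * w) = Re (ip (s * (s * w)) (s * (s * w)))" by (simp add: nn_def s2_def mult.assoc)
    also have "\<dots> = Re (ip (s2 * (s * w)) (s * w))" by (simp add: ip_adj sts s2_def mult.assoc)
    also have "\<dots> \<le> K * nn (s * w)" by (rule hi)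
    also have "nn (s * w) = P" by (simp add: P_def nn_def ip_adj sts s2_def mult.assoc)
    finally have q: "Re (ip (s2 * (s2 * w)) w) \<le> K * P" .
    have rw: "Re (ip (r * w) w) = nn w - c * P" by (simp add: ipr nn_def P_def)
    have "c * c * Re (ip (s2 * (s2 * w)) w) \<le> c * c * (K * P)"
      using q c0 by (simp add: mult_left_mono)
    also have "c * c * (K * P) = c * P" using cK by (simp add: algebra_simps)
    finally have "nn (r * w) \<le> nn w - c * P" using eq rw by linarith
    moreover have "c * nn w \<le> c * P" using lo[of w] c0 by (simp add: P_def)
    ultimately show ?thesis by (simp add: algebra_simps)
  qed
  have decay: "nn (r ^ N * e) \<le> (1 - c) ^ N * nn e" for N
  proof (induction N)
    case 0 then show ?case by simp
  next
    case (Suc N)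
    have "nn (r ^ Suc N * e) = nn (r * (r ^ N * e))" by (simp add: mult.assoc)
    also have "\<dots> \<le> (1 - c) * nn (r ^ N * e)" by (rule contr)
    also have "\<dots> \<le> (1 - c) * ((1 - c) ^ N * nn e)" using Suc c1 by (simp add: mult_left_mono)
    finally show ?case by simp
  qed
  have rke: "r ^ k * e = e * r ^ k" for k by (rule power_commuting_commutes[OF re])
  have ident: "tr e - tr (r ^ N * e) = complex_of_real c * (\<Sum>k<N. ip (r ^ k * e) e)" for N
  proof -
    define Q where "Q = (\<Sum>k<N. r ^ k)"
    have Qe: "Q * e = e * Q" by (simp add: Q_def sum_distrib_left sum_distrib_right rke)
    have "e * (1 - r ^ N) = e * ((1 - r) * Q)" by (simp add: Q_def geom_ring)
    also have "\<dots> = c *\<^sub>R (e * s2 * Q)" by (simp add: r_def mult.assoc)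
    finally have H: "e * (1 - r ^ N) = c *\<^sub>R (e * s2 * Q)" .
    have "tr e - tr (r ^ N * e) = tr (e * (1 - r ^ N))"
      by (simp add: right_diff_distrib tr_minus tr_comm[of "r ^ N" e])
    also have "\<dots> = complex_of_real c * tr (e * f * e * Q)" by (simp only: H tr_scaleR es2)
    also have "tr (e * f * e * Q) = tr ((e * Q) * (e * f))" using tr_comm[of "e * f" "e * Q"] by (simp add: mult.assoc)
    also have "\<dots> = tr (Q * e * f)" by (simp add: Qe[symmetric] mult.assoc[symmetric]) (simp add: mult.assoc ee)
    also have "\<dots> = (\<Sum>k<N. ip (r ^ k * e) e)"
      by (simp add: Q_def ip_def f_def sum_distrib_right tr_sum)
    finally show ?thesis .
  qed
  have sum_ge: "nn e \<le> (\<Sum>k<N. Re (ip (r ^ k * e) e))" if "0 < N" for N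
  proof -
    have "(\<Sum>k<N. Re (ip (r ^ k * e) e)) = Re (ip (r ^ 0 * e) e) + (\<Sum>k\<in>{..<N} - {0}. Re (ip (r ^ k * e) e))"
      using that by (subst sum.remove[of _ 0]) auto
    moreover have "0 \<le> (\<Sum>k\<in>{..<N} - {0}. Re (ip (r ^ k * e) e))"
      by (rule sum_nonneg) (rule pos_powers[OF str pos])
    ultimately show ?thesis by (simp add: nn_def)
  qed
  have bound: "(c * nn e)\<^sup>2 \<le> (1 - c) ^ N * nn e" for N
  proof -
    have "c * nn e \<le> norm (tr (r ^ Suc N * e))"
    proof -
      have "c * nn e \<le> c * (\<Sum>k<Suc N. Re (ip (r ^ k * e) e))"
        using sum_ge[of "Suc N"] c0 by simp
      also have "\<dots> = Re (complex_of_real c * (\<Sum>k<Suc N. ip (r ^ k * e) e))"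
        by (simp add: Re_sum)
      also have "\<dots> = Re (- tr (r ^ Suc N * e))"
      proof -
        have id2: "complex_of_real c * (\<Sum>k<Suc N. ip (r ^ k * e) e) = - tr (r ^ Suc N * e)"
          using ident[of "Suc N"] t0 by simp
        show ?thesis by (simp only: id2)
      qed
      also have "\<dots> = - Re (tr (r ^ Suc N * e))" by simp
      also have "\<dots> \<le> norm (tr (r ^ Suc N * e))" by (metis abs_Re_le_cmod abs_le_D2)
      finally show ?thesis .
    qed
    then have "(c * nn e)\<^sup>2 \<le> (norm (tr (r ^ Suc N * e)))\<^sup>2"
      using c0 nn_nonneg[of e] by (simp add: power_mono)
    also have "\<dots> \<le> nn (r ^ Suc N * e)" by (rule tr_sq_le)
    also have "\<dots> \<le> (1 - c) ^ Suc N * nn e" by (rule decay)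
    also have "\<dots> \<le> (1 - c) ^ N * nn e"
      using c0 c1 nn_nonneg[of e] by (simp add: mult_right_mono mult_left_le_one_le)
    finally show ?thesis .
  qed
  show "e = 0"
  proof (rule nn_zero_imp, rule ccontr)
    assume ne: "nn e \<noteq> 0"
    then have np: "0 < nn e" using nn_nonneg[of e] by simp
    have "(\<lambda>N. (1 - c) ^ N) \<longlonglongrightarrow> 0"
      by (rule LIMSEQ_power_zero) (use c0 c1 in simp)
    moreover have "0 < c * c * nn e" using c0 np by simp
    ultimately obtain N0 where "\<forall>n\<ge>N0. norm ((1 - c) ^ n - 0) < c * c * nn e"
      by (blast dest: LIMSEQ_D)
    then have "norm ((1 - c) ^ N0 - 0) < c * c * nn e" by blast
    then have "(1 - c) ^ N0 < c * c * nn e" by simp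
    define N where "N = N0"
    then have "(1 - c) ^ N < c * c * nn e" using \<open>(1 - c) ^ N0 < c * c * nn e\<close> by simp
    then have "(1 - c) ^ N * nn e < c * c * nn e * nn e" using np by simp
    moreover have "(c * nn e)\<^sup>2 \<le> (1 - c) ^ N * nn e" by (rule bound)
    ultimately show False by (simp add: power2_eq_square algebra_simps)
  qed
qed

lemma conj_class_self: "g \<in> conj_class (g::'g::group_add)"
  unfolding conj_class_def by (rule CollectI, rule exI[of _ 0]) simp

lemma conj_class_eq:
  assumes "g \<in> conj_class (x::'g::group_add)"
  shows "conj_class g = conj_class x"
proof -
  obtain k where g: "g = k + x - k" using assms by (auto simp: conj_class_def)
  show ?thesis
  proof
    show "conj_class g \<subseteq> conj_class x"
    proof
      fix y assume "y \<in> conj_class g"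
      then obtain m where "y = m + g - m" by (auto simp: conj_class_def)
      then have "y = (m + k) + x - (m + k)"
        by (simp only: g diff_conv_add_uminus add.assoc minus_add minus_minus add_minus_cancel minus_add_cancel)
      then show "y \<in> conj_class x" by (auto simp: conj_class_def)
    qed
  next
    show "conj_class x \<subseteq> conj_class g"
    proof
      fix y assume "y \<in> conj_class x"
      then obtain m where "y = m + x - m" by (auto simp: conj_class_def)
      then have "y = (m + - k) + g - (m + - k)"
        by (simp only: g diff_conv_add_uminus add.assoc minus_add minus_minus add_minus_cancel minus_add_cancel)
      then show "y \<in> conj_class g" by (auto simp: conj_class_def)
    qed
  qed
qed

lemma conj_class_zero: "conj_class (0::'g::group_add) = {0}"
  by (auto simp: conj_class_def)

lemma bij_classes:
  "bij_betw (\<lambda>g::'g::group_add. (conj_class g, g)) UNIV (Sigma conj_classes (\<lambda>C. C))"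
proof (rule bij_betwI[where g=snd])
  show "(\<lambda>g. (conj_class g, g)) \<in> UNIV \<rightarrow> Sigma conj_classes (\<lambda>C. C)"
    by (auto simp: conj_classes_def conj_class_self)
  show "snd \<in> Sigma conj_classes (\<lambda>C. C) \<rightarrow> UNIV" by simp
  fix p assume "p \<in> Sigma conj_classes (\<lambda>C. C)"
  then obtain C g where p: "p = (C, g)" "C \<in> conj_classes" "g \<in> C" by auto
  then obtain x where "C = conj_class x" by (auto simp: conj_classes_def)
  then show "(conj_class (snd p), snd p) = p" using p conj_class_eq by auto
qed simp

lemma class_sum:
  fixes a :: "'g::group_add \<Rightarrow> complex"
  assumes a: "l1 a"
    and van: "\<And>C. C \<in> conj_classes \<Longrightarrow> C \<noteq> {0} \<Longrightarrow> (\<Sum>\<^sub>\<infinity>g\<in>C. a g) = 0"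
  shows "(\<Sum>\<^sub>\<infinity>g. a g) = a 0"
proof -
  have sa: "a summable_on UNIV"
    using a unfolding l1_def by (rule Infinite_Sum.abs_summable_summable)
  have sS: "(\<lambda>p. a (snd p)) summable_on Sigma conj_classes (\<lambda>C. C)"
    using summable_on_reindex_bij_betw[OF bij_classes, of "\<lambda>p. a (snd p)"] sa by simp
  have "(\<Sum>\<^sub>\<infinity>g. a g) = (\<Sum>\<^sub>\<infinity>p\<in>Sigma conj_classes (\<lambda>C. C). a (snd p))"
    using infsum_reindex_bij_betw[OF bij_classes, of "\<lambda>p. a (snd p)"] by simp
  also have "\<dots> = (\<Sum>\<^sub>\<infinity>C\<in>conj_classes. \<Sum>\<^sub>\<infinity>g\<in>C. a g)"
    using infsum_Sigma'_banach[of "\<lambda>C g. a g" conj_classes "\<lambda>C. C"] sS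
    by (simp add: case_prod_unfold)
  also have "\<dots> = (\<Sum>\<^sub>\<infinity>C\<in>{{0::'g}}. \<Sum>\<^sub>\<infinity>g\<in>C. a g)"
    by (subst infsum_cong_neutral[where T="{{0::'g}}"])
       (auto simp: van conj_classes_def conj_class_zero[symmetric])
  also have "\<dots> = a 0" by simp
  finally show ?thesis .
qed

theorem proposition6p1:
  fixes a :: "'g::group_add \<Rightarrow> complex"
  assumes "torsion_free TYPE('g)"
    and "\<forall>n (E :: nat \<Rightarrow> nat \<Rightarrow> 'g \<Rightarrow> complex). idem_mat n E \<longrightarrow> in_FC_sum (HS1 n E)"
    and "l1 a"
    and "conv a a = a"
  shows "a = (\<lambda>_. 0) \<or> a = l1_one"
proof -
  note tf = assms(1) and hyp = assms(2) and a = assms(3) and aa = assms(4)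
  define E :: "nat \<Rightarrow> nat \<Rightarrow> 'g \<Rightarrow> complex" where "E = (\<lambda>i j. a)"
  have "idem_mat 1 E"
    by (simp add: idem_mat_def E_def mat_mult_def a aa)
  then have fc: "in_FC_sum (HS1 1 E)" using hyp by blast
  have HS: "HS1 1 E C = (\<Sum>\<^sub>\<infinity>g\<in>C. a g)" for C by (simp add: HS1_def E_def)
  have van: "(\<Sum>\<^sub>\<infinity>g\<in>C. a g) = 0" if C: "C \<in> conj_classes" "C \<noteq> {0}" for C
  proof (rule ccontr)
    assume nz: "(\<Sum>\<^sub>\<infinity>g\<in>C. a g) \<noteq> 0"
    have "C \<in> {C \<in> conj_classes. HS1 1 E C \<noteq> 0}" using C(1) nz HS[of C] by simp
    then have "C \<in> FC" using fc unfolding in_FC_sum_def by blast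
    then obtain x where Cx: "C = conj_class x" and fo: "finite_order x" by (auto simp: FC_def)
    from fo tf have "x = 0" unfolding finite_order_def torsion_free_def by blast
    then show False using Cx C by (simp add: conj_class_zero)
  qed
  have eps_a: "(\<Sum>\<^sub>\<infinity>g. a g) = a 0" by (rule class_sum[OF a van])
  define A :: "'g l1f" where "A = Abs_l1f a"
  have repA: "rep A = a" unfolding A_def using a by (simp add: Abs_l1f_inverse)
  have AA: "A * A = A" by (rule rep_inject[THEN iffD1]) (simp add: rep_times repA aa)
  have "eps A = eps A * eps A" using AA eps_mult[of A A] by simp
  then have "eps A = 0 \<or> eps A = 1"
    by (metis mult_cancel_left1 mult_eq_0_iff)
  moreover have "eps A = tr A" by (simp add: eps_def tr_def repA eps_a)
  ultimately have t: "tr A = 0 \<or> tr A = 1" by simp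
  then show ?thesis
  proof
    assume "tr A = 0"
    then have "A = 0" by (rule idem_tr_zero[OF AA])
    then have "a = rep 0" using repA by simp
    then show ?thesis by (simp add: rep_zero fun_eq_iff)
  next
    assume t1: "tr A = 1"
    have BB: "(1 - A) * (1 - A) = 1 - A" by (simp add: algebra_simps AA)
    have "tr (1 - A) = 0" by (simp add: tr_minus tr_one t1)
    then have "1 - A = 0" by (rule idem_tr_zero[OF BB])
    then have "A = 1" by simp
    then have "a = rep 1" using repA by simp
    then show ?thesis by (simp add: rep_one fun_eq_iff)
  qed
qed

end
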